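(* Let $m_2>m_1\ge1$ be integers and consider tilings with $(\frac12,\frac12;m_1)$- and $(\frac12,\frac12;m_2)$-combs. The mixed metatiles occur in pairs, whereby one element of the pair is generated from the other by interchanging the contents of the two slots in each cell; that is, this interchange operation maps every mixed metatile of length $l$ to a mixed metatile of length $l$ that is different from it.
   Context: An $n$-board is the strip $[0,n]\times[0,1]$ divided into unit cells $[k-1,k]\times[0,1]$, $k=1,\dots,n$; each cell consists of a left slot $[k-1,k-\frac12]\times[0,1]$ and a right slot $[k-\frac12,k]\times[0,1]$. A $(w,g;t)$-comb is a tile consisting of a row of $t$ rectangles (teeth) of size $w\times1$, consecutive teeth separated by a gap of width $g$; gaps are not part of the tile and may be occupied by other tiles. A tiling is a placement of translated (unrotated) combs whose teeth cover the board exactly without overlap. Given a tiling of an $n$-board, an integer $x$ with $0<x<n$ is a cut point if every comb has all of its teeth in $[0,x]$ or all in $[x,n]$. A metatile of length $l$ is a tiling of an $l$-board with no cut point (every tiling splits uniquely at its cut points into a sequence of metatiles). A metatile is mixed if it contains combs of more than one type. *)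

theory Defs
  imports Main
begin

text \<open>Slots of an n-board are numbered 0..2n-1 (slot j is [j/2,(j+1)/2]);
cell k (1-based) consists of slots 2(k-1) (left) and 2k-1 (right).
A (1/2,1/2;t)-comb placed with first tooth on slot a is the pair (a,t);
its teeth occupy the slots a, a+2, ..., a+2(t-1).\<close>

type_synonym comb = "nat \<times> nat"

definition teeth :: "comb \<Rightarrow> nat set" where
  "teeth c = {fst c + 2 * i | i. i < snd c}"

definition is_tiling :: "nat set \<Rightarrow> nat \<Rightarrow> comb set \<Rightarrow> bool" where
  "is_tiling ts n T \<longleftrightarrow>
     (\<forall>c\<in>T. snd c \<in> ts) \<and>
     (\<forall>c\<in>T. \<forall>d\<in>T. c \<noteq> d \<longrightarrow> teeth c \<inter> teeth d = {}) \<and>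
     (\<Union>c\<in>T. teeth c) = {..<2 * n}"

definition cut_point :: "nat \<Rightarrow> comb set \<Rightarrow> nat \<Rightarrow> bool" where
  "cut_point n T x \<longleftrightarrow> 0 < x \<and> x < n \<and>
     (\<forall>c\<in>T. teeth c \<subseteq> {..<2 * x} \<or> teeth c \<subseteq> {2 * x..})"

definition metatile :: "nat set \<Rightarrow> nat \<Rightarrow> comb set \<Rightarrow> bool" where
  "metatile ts l T \<longleftrightarrow> is_tiling ts l T \<and> \<not> (\<exists>x. cut_point l T x)"

definition mixed :: "comb set \<Rightarrow> bool" where
  "mixed T \<longleftrightarrow> (\<exists>c\<in>T. \<exists>d\<in>T. snd c \<noteq> snd d)"

definition swap_slot :: "nat \<Rightarrow> nat" where
  "swap_slot j = (if even j then j + 1 else j - 1)"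

definition swap_tiling :: "comb set \<Rightarrow> comb set" where
  "swap_tiling T = {c'. \<exists>c\<in>T. snd c' = snd c \<and> teeth c' = swap_slot ` teeth c}"

end

theory Submission
  imports Defs
begin

lemma mem_teeth: "j \<in> teeth c \<longleftrightarrow> (\<exists>i<snd c. j = fst c + 2*i)"
  unfolding teeth_def by auto

lemma sw_sw[simp]: "swap_slot (swap_slot j) = j"
  unfolding swap_slot_def by auto

lemma sw_less[simp]: "swap_slot j < 2*x \<longleftrightarrow> j < 2*x"
  unfolding swap_slot_def by (auto, presburger+)

lemma sw_inj: "inj swap_slot"
  by (metis injI sw_sw)

lemma sw_add: "swap_slot (a + 2*i) = swap_slot a + 2*i"
proof (cases "even a")
  case False
  then have "0 < a" using odd_pos by blast
  then show ?thesis using False unfolding swap_slot_def by simp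
qed (simp add: swap_slot_def)

lemma sw_teeth: "swap_slot ` teeth (a,t) = teeth (swap_slot a, t)"
proof -
  have "teeth (a,t) = (\<lambda>i. a + 2*i) ` {..<t}" unfolding teeth_def by auto
  moreover have "teeth (swap_slot a,t) = (\<lambda>i. swap_slot a + 2*i) ` {..<t}" unfolding teeth_def by auto
  ultimately show ?thesis by (simp add: image_image sw_add)
qed

lemma teeth_inj: "1 \<le> t \<Longrightarrow> teeth (a,t) = teeth (b,t) \<Longrightarrow> a = b"
proof -
  assume t: "1 \<le> t" and e: "teeth (a,t) = teeth (b,t)"
  have "a \<in> teeth (a,t)" "b \<in> teeth (b,t)" using t unfolding mem_teeth by force+
  then have "a \<in> teeth (b,t)" "b \<in> teeth (a,t)" using e by auto
  then show ?thesis unfolding mem_teeth by fastforce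
qed

lemma teeth_ne: "1 \<le> snd c \<Longrightarrow> fst c \<in> teeth c"
  unfolding mem_teeth by (rule exI[of _ 0]) simp

definition swc :: "comb \<Rightarrow> comb" where "swc c = (swap_slot (fst c), snd c)"

lemma teeth_swc: "teeth (swc c) = swap_slot ` teeth c"
  unfolding swc_def by (cases c) (simp add: sw_teeth)

lemma swap_tiling_eq:
  assumes "\<forall>c\<in>T. 1 \<le> snd c"
  shows "swap_tiling T = swc ` T"
proof
  show "swap_tiling T \<subseteq> swc ` T"
  proof
    fix c' assume "c' \<in> swap_tiling T"
    then obtain c where c: "c \<in> T" "snd c' = snd c" "teeth c' = swap_slot ` teeth c"
      unfolding swap_tiling_def by auto
    then have "teeth (fst c', snd c) = teeth (swap_slot (fst c), snd c)"
      using teeth_swc[of c] unfolding swc_def by (metis prod.collapse)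
    then have "fst c' = swap_slot (fst c)" using teeth_inj assms c(1) by blast
    then have "c' = swc c" unfolding swc_def using c(2) by (metis prod.collapse)
    then show "c' \<in> swc ` T" using c(1) by blast
  qed
  show "swc ` T \<subseteq> swap_tiling T"
  proof
    fix x assume "x \<in> swc ` T"
    then obtain c where c: "c \<in> T" "x = swc c" by blast
    then show "x \<in> swap_tiling T" unfolding swap_tiling_def
      using teeth_swc[of c] by (auto simp: swc_def)
  qed
qed

lemma sw_lessThan: "swap_slot ` {..<2*n} = {..<2*n}"
proof
  show "swap_slot ` {..<2*n} \<subseteq> {..<2*n}" by auto
  show "{..<2*n} \<subseteq> swap_slot ` {..<2*n}"
  proof
    fix x assume "x \<in> {..<2*n}"
    then show "x \<in> swap_slot ` {..<2*n}" by (intro image_eqI[of _ _ "swap_slot x"]) auto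
  qed
qed

lemma tiling_swc:
  assumes "is_tiling ts n T"
  shows "is_tiling ts n (swc ` T)"
proof -
  have T1: "\<forall>c\<in>T. snd c \<in> ts" using assms unfolding is_tiling_def by (elim conjE)
  have T2: "\<forall>c\<in>T. \<forall>d\<in>T. c \<noteq> d \<longrightarrow> teeth c \<inter> teeth d = {}"
    using assms unfolding is_tiling_def by (elim conjE)
  have T3: "(\<Union>c\<in>T. teeth c) = {..<2 * n}" using assms unfolding is_tiling_def by (elim conjE)
  have a: "\<forall>c\<in>swc ` T. snd c \<in> ts" using T1 by (simp add: swc_def)
  have b: "\<forall>c\<in>swc ` T. \<forall>d\<in>swc ` T. c \<noteq> d \<longrightarrow> teeth c \<inter> teeth d = {}"
  proof (intro ballI impI)
    fix c d
    assume cd: "c \<in> swc ` T" "d \<in> swc ` T" "c \<noteq> d"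
    obtain c0 where "c0 \<in> T" "c = swc c0" using cd(1) by blast
    obtain d0 where "d0 \<in> T" "d = swc d0" using cd(2) by blast
    have "c0 \<noteq> d0" using cd(3) \<open>c = swc c0\<close> \<open>d = swc d0\<close> by blast
    then have "teeth c0 \<inter> teeth d0 = {}" using T2 \<open>c0 \<in> T\<close> \<open>d0 \<in> T\<close> by blast
    then have "swap_slot ` (teeth c0 \<inter> teeth d0) = {}" by simp
    then show "teeth c \<inter> teeth d = {}" unfolding \<open>c = swc c0\<close> \<open>d = swc d0\<close> teeth_swc
      image_Int[OF sw_inj] .
  qed
  have "(\<Union>c\<in>swc ` T. teeth c) = (\<Union>c\<in>T. swap_slot ` teeth c)"
    by (simp add: teeth_swc)
  also have "\<dots> = swap_slot ` (\<Union>c\<in>T. teeth c)" by (rule image_UN[symmetric])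
  also have "\<dots> = {..<2*n}" unfolding T3 by (rule sw_lessThan)
  finally show ?thesis using a b unfolding is_tiling_def by (intro conjI)
qed

lemma cut_swc: "cut_point n (swc ` T) x \<longleftrightarrow> cut_point n T x"
proof -
  have 1: "\<And>A. swap_slot ` A \<subseteq> {..<2*x} \<longleftrightarrow> A \<subseteq> {..<2*x}" by auto
  have 2: "\<And>A. swap_slot ` A \<subseteq> {2*x..} \<longleftrightarrow> A \<subseteq> {2*x..}"
    by (auto simp: not_less[symmetric])
  have "(\<forall>c\<in>swc ` T. teeth c \<subseteq> {..<2 * x} \<or> teeth c \<subseteq> {2 * x..}) \<longleftrightarrow>
        (\<forall>c\<in>T. teeth c \<subseteq> {..<2 * x} \<or> teeth c \<subseteq> {2 * x..})"
    by (simp only: ball_simps teeth_swc 1 2)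
  then show ?thesis unfolding cut_point_def by simp
qed

lemma teeth01: "teeth (0,t) \<union> teeth (1,t) = {..<2*t}"
proof
  show "teeth (0,t) \<union> teeth (1,t) \<subseteq> {..<2*t}" by (auto simp: mem_teeth)
  show "{..<2*t} \<subseteq> teeth (0,t) \<union> teeth (1,t)"
  proof
    fix j assume "j \<in> {..<2*t}"
    then have jt: "j div 2 < t" by simp
    show "j \<in> teeth (0,t) \<union> teeth (1,t)"
    proof (cases "even j")
      case True
      then have "j = 0 + 2 * (j div 2)" by simp
      then have "j \<in> teeth (0,t)" unfolding mem_teeth using jt by (intro exI[of _ "j div 2"]) simp
      then show ?thesis by blast
    next
      case False
      then have "j = 1 + 2 * (j div 2)" by presburger
      then have "j \<in> teeth (1,t)" unfolding mem_teeth using jt by (intro exI[of _ "j div 2"]) simp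
      then show ?thesis by blast
    qed
  qed
qed

theorem lemma1:
  fixes m1 m2 l :: nat and T :: "comb set"
  assumes "1 \<le> m1" and "m1 < m2"
    and "metatile {m1, m2} l T" and "mixed T"
  shows "metatile {m1, m2} l (swap_tiling T) \<and> mixed (swap_tiling T)
         \<and> swap_tiling T \<noteq> T"
proof -
  have til: "is_tiling {m1,m2} l T" using assms(3) unfolding metatile_def by simp
  have T1: "\<forall>c\<in>T. snd c \<in> {m1,m2}" using til unfolding is_tiling_def by (elim conjE)
  have T2: "\<forall>c\<in>T. \<forall>d\<in>T. c \<noteq> d \<longrightarrow> teeth c \<inter> teeth d = {}"
    using til unfolding is_tiling_def by (elim conjE)
  have T3: "(\<Union>c\<in>T. teeth c) = {..<2 * l}" using til unfolding is_tiling_def by (elim conjE)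
  have pos: "\<forall>c\<in>T. 1 \<le> snd c" using T1 assms(1,2) by auto
  have eq: "swap_tiling T = swc ` T" using swap_tiling_eq[OF pos] .
  have m1: "metatile {m1, m2} l (swc ` T)"
  proof -
    have "is_tiling {m1,m2} l (swc ` T)" using tiling_swc[OF til] .
    moreover have "\<not> (\<exists>x. cut_point l (swc ` T) x)"
      using assms(3) cut_swc unfolding metatile_def by simp
    ultimately show ?thesis unfolding metatile_def by simp
  qed
  have m2: "mixed (swc ` T)"
  proof -
    obtain c d where cd: "c \<in> T" "d \<in> T" "snd c \<noteq> snd d" using assms(4) unfolding mixed_def by blast
    have "swc c \<in> swc ` T" "swc d \<in> swc ` T" using cd by auto
    moreover have "snd (swc c) \<noteq> snd (swc d)" using cd(3) by (simp add: swc_def)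
    ultimately show ?thesis unfolding mixed_def by blast
  qed
  have m3: "swc ` T \<noteq> T"
  proof
    assume fx: "swc ` T = T"
    obtain c d where cd: "c \<in> T" "d \<in> T" "snd c \<noteq> snd d" using assms(4) unfolding mixed_def by blast
    have "teeth c \<noteq> {}" using pos cd(1) teeth_ne by blast
    then have "teeth c \<subseteq> {..<2*l}" "teeth c \<noteq> {}" using T3 cd(1) by blast+
    then have "l > 0" by (metis lessThan_0 mult_0_right neq0_conv subset_empty)
    then have "0 \<in> (\<Union>c\<in>T. teeth c)" using T3 by simp
    then obtain c0 where c0: "c0 \<in> T" "0 \<in> teeth c0" by auto
    then have "fst c0 = 0" unfolding mem_teeth by auto
    define t where "t = snd c0"
    have A: "(0,t) \<in> T" using c0 \<open>fst c0 = 0\<close> t_def by (metis prod.collapse)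
    have "swc (0,t) = (1,t)" by (simp add: swc_def swap_slot_def)
    then have B: "(1,t) \<in> T" using fx A by (metis image_eqI)
    have t1: "1 \<le> t" using pos A by force
    have other: "teeth e \<subseteq> {2*t..}" if "e \<in> T" "e \<noteq> (0,t)" "e \<noteq> (1,t)" for e
    proof -
      have "teeth e \<inter> teeth (0,t) = {}" "teeth e \<inter> teeth (1,t) = {}"
        using T2 that A B by blast+
      then have "teeth e \<inter> {..<2*t} = {}" using teeth01[of t] by blast
      then show ?thesis by (auto simp: not_less[symmetric])
    qed
    obtain e where e: "e \<in> T" "e \<noteq> (0,t)" "e \<noteq> (1,t)"
    proof (cases "snd c = t")
      case True
      then have "snd d \<noteq> t" using cd(3) by simp
      then have "d \<noteq> (0,t)" "d \<noteq> (1,t)" by auto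
      then show ?thesis using that cd(2) by blast
    next
      case False
      then have "c \<noteq> (0,t)" "c \<noteq> (1,t)" by auto
      then show ?thesis using that cd(1) by blast
    qed
    have "teeth e \<subseteq> {..<2*l}" using T3 e(1) by blast
    obtain j where j: "j \<in> teeth e" using pos e(1) teeth_ne by blast
    have "j < 2*l" "2*t \<le> j" using j \<open>teeth e \<subseteq> {..<2*l}\<close> other[OF e] by auto
    then have "t < l" by simp
    have "cut_point l T t"
      unfolding cut_point_def
    proof (intro conjI ballI)
      show "0 < t" using t1 by simp
      show "t < l" by fact
      fix e assume "e \<in> T"
      show "teeth e \<subseteq> {..<2 * t} \<or> teeth e \<subseteq> {2 * t..}"
        using other[OF \<open>e \<in> T\<close>] teeth01[of t] by blast
    qed
    then show False using assms(3) unfolding metatile_def by blast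
  qed
  show ?thesis using m1 m2 m3 eq by simp
qed

end
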